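(* Let $T_1,T_2$ be equidistant trees on leaf set $X$ with $|X|=n$, and let $X_0\subseteq X$ be a set of leaves which forms a clade in both $T_1$ and $T_2$, such that the tree topology of this clade is the same in $T_1$ and in $T_2$. Then for any tree $T$ on the tropical line segment from $T_1$ to $T_2$, $X_0$ is also a clade of $T$, with the same tree topology as in $T_1$ and $T_2$.
   Context: Max-plus arithmetic: $a\oplus b=\max\{a,b\}$, $a\odot b=a+b$; vectors in $\mathbb{R}^e$, $e=\binom n2$, with coordinates indexed by pairs of leaves, are considered modulo $\mathbb R\mathbf 1$. An equidistant tree is a rooted phylogenetic tree on leaf set $X$ with nonnegative edge lengths and all root-to-leaf distances equal; its ultrametric $u$ is the vector of pairwise leaf distances, and every ultrametric determines a unique equidistant tree. The tropical line segment between trees with ultrametrics $u,v$ consists of the trees with ultrametrics $a\odot u\oplus b\odot v$, $a,b\in\mathbb R$. A clade of a tree is the set of all leaves descending from some vertex; the clade on $X_0$ is the equidistant tree obtained by restricting the tree to the leaves $X_0$ (its ultrametric is the restriction $(u_{ij})_{i,j\in X_0}$), and its tree topology is the topology of this restricted tree. *)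

theory Defs
  imports Main "HOL.Real"
begin

text \<open>Ultrametrics on a finite leaf set X, represented by the pairwise-distance
function u :: 'a => 'a => real; only off-diagonal entries (pairs of distinct
leaves) are coordinates.\<close>

definition ultrametric :: "'a set \<Rightarrow> ('a \<Rightarrow> 'a \<Rightarrow> real) \<Rightarrow> bool" where
  "ultrametric X u \<longleftrightarrow>
     (\<forall>i\<in>X. \<forall>j\<in>X. i \<noteq> j \<longrightarrow> u i j = u j i \<and> 0 \<le> u i j) \<and>
     (\<forall>i\<in>X. \<forall>j\<in>X. \<forall>k\<in>X. i \<noteq> j \<and> i \<noteq> k \<and> j \<noteq> k \<longrightarrow>
        u i j \<le> max (u i k) (u j k))"

text \<open>A clade of the equidistant tree with ultrametric u on leaf set X: a nonempty
set A of leaves such that there is a vertex whose descendant leaves are exactly A,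
i.e. any two leaves of A are strictly closer to each other than to any leaf outside A.\<close>

definition is_clade :: "'a set \<Rightarrow> ('a \<Rightarrow> 'a \<Rightarrow> real) \<Rightarrow> 'a set \<Rightarrow> bool" where
  "is_clade X u A \<longleftrightarrow> A \<noteq> {} \<and> A \<subseteq> X \<and>
     (\<forall>i\<in>A. \<forall>j\<in>A. \<forall>k\<in>X - A. i \<noteq> j \<longrightarrow> u i j < u i k)"

text \<open>The (rooted) tree topology of the tree with ultrametric u restricted to leaf set X0,
identified with its set of clades (clusters).\<close>

definition tree_topology :: "'a set \<Rightarrow> ('a \<Rightarrow> 'a \<Rightarrow> real) \<Rightarrow> 'a set set" where
  "tree_topology X0 u = {A. is_clade X0 u A}"

text \<open>Points of the tropical line segment: a \<odot> u \<oplus> b \<odot> v.\<close>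

definition trop_comb :: "real \<Rightarrow> ('a \<Rightarrow> 'a \<Rightarrow> real) \<Rightarrow> real \<Rightarrow> ('a \<Rightarrow> 'a \<Rightarrow> real) \<Rightarrow> 'a \<Rightarrow> 'a \<Rightarrow> real" where
  "trop_comb a u b v = (\<lambda>i j. max (a + u i j) (b + v i j))"

end

theory Submission
  imports Defs
begin

lemma ult_sym: "ultrametric X u \<Longrightarrow> i \<in> X \<Longrightarrow> j \<in> X \<Longrightarrow> i \<noteq> j \<Longrightarrow> u i j = u j i"
  unfolding ultrametric_def by blast

lemma ult_tri: "ultrametric X u \<Longrightarrow> i \<in> X \<Longrightarrow> j \<in> X \<Longrightarrow> k \<in> X \<Longrightarrow> i \<noteq> j
   \<Longrightarrow> i \<noteq> k \<Longrightarrow> j \<noteq> k \<Longrightarrow> u i j \<le> max (u i k) (u j k)"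
  unfolding ultrametric_def by blast

lemma sep_iff:
  assumes U: "ultrametric X u" and S: "X0 \<subseteq> X"
    and i: "i \<in> X0" and j: "j \<in> X0" and k: "k \<in> X0"
    and ij: "i \<noteq> j" and ik: "i \<noteq> k" and jk: "j \<noteq> k"
  shows "u i j < u i k \<longleftrightarrow> (\<exists>C. is_clade X0 u C \<and> i \<in> C \<and> j \<in> C \<and> k \<notin> C)"
proof
  assume lt: "u i j < u i k"
  define C where "C = insert i {x\<in>X0. x \<noteq> i \<and> u i x \<le> u i j}"
  have sym: "\<And>p q. p \<in> X0 \<Longrightarrow> q \<in> X0 \<Longrightarrow> p \<noteq> q \<Longrightarrow> u p q = u q p"
    using ult_sym[OF U] S by blast
  have tri: "\<And>p q r. p \<in> X0 \<Longrightarrow> q \<in> X0 \<Longrightarrow> r \<in> X0 \<Longrightarrow> p \<noteq> q \<Longrightarrow> p \<noteq> r \<Longrightarrow> q \<noteq> r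
      \<Longrightarrow> u p q \<le> max (u p r) (u q r)"
    using ult_tri[OF U] S by blast
  have "is_clade X0 u C"
    unfolding is_clade_def
  proof (intro conjI ballI impI)
    show "C \<noteq> {}" using C_def by auto
    show "C \<subseteq> X0" using C_def i by auto
  next
    fix p q r assume p: "p \<in> C" and q: "q \<in> C" and r: "r \<in> X0 - C" and pq: "p \<noteq> q"
    have pX: "p \<in> X0" "q \<in> X0" "r \<in> X0" using p q r C_def i by auto
    have ri: "r \<noteq> i" and rgt: "u i r > u i j" using r C_def by auto
    have rp: "r \<noteq> p" "r \<noteq> q" using p q r by auto
    have pqle: "u p q \<le> u i j"
    proof (cases "p = i")
      case True then show ?thesis using q pq C_def by auto
    next
      case pi: False
      show ?thesis
      proof (cases "q = i")
        case True then show ?thesis using p pi C_def sym[of i p] pX i by auto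
      next
        case qi: False
        have "u p q \<le> max (u p i) (u q i)" using tri[of p q i] pX i pi qi pq by auto
        moreover have "u p i \<le> u i j" "u q i \<le> u i j"
          using p q pi qi C_def sym[of i p] sym[of i q] pX i by auto
        ultimately show ?thesis by auto
      qed
    qed
    have "u p r > u i j"
    proof (cases "p = i")
      case True then show ?thesis using rgt by simp
    next
      case pi: False
      have "u i r \<le> max (u i p) (u p r)" using tri[of i r p] sym[of r p] pX i pi ri rp by auto
      moreover have "u i p \<le> u i j" using p pi C_def by auto
      ultimately show ?thesis using rgt by auto
    qed
    then show "u p q < u p r" using pqle by simp
  qed
  moreover have "i \<in> C" "j \<in> C" "k \<notin> C" using C_def j ij ik lt by auto
  ultimately show "\<exists>C. is_clade X0 u C \<and> i \<in> C \<and> j \<in> C \<and> k \<notin> C" by blast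
next
  assume "\<exists>C. is_clade X0 u C \<and> i \<in> C \<and> j \<in> C \<and> k \<notin> C"
  then show "u i j < u i k" using k ij unfolding is_clade_def by blast
qed

theorem theorem5:
  fixes X X0 :: "'a set" and u v :: "'a \<Rightarrow> 'a \<Rightarrow> real" and a b :: real
  assumes "finite X"
    and "ultrametric X u" and "ultrametric X v"
    and "is_clade X u X0" and "is_clade X v X0"
    and "tree_topology X0 u = tree_topology X0 v"
  shows "is_clade X (trop_comb a u b v) X0 \<and>
         tree_topology X0 (trop_comb a u b v) = tree_topology X0 u"
proof -
  let ?w = "trop_comb a u b v"
  have S: "X0 \<subseteq> X" using assms(4) unfolding is_clade_def by blast
  have part1: "is_clade X ?w X0"
    unfolding is_clade_def
  proof (intro conjI ballI impI)
    show "X0 \<noteq> {}" "X0 \<subseteq> X" using assms(4) unfolding is_clade_def by auto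
  next
    fix i j k assume "i \<in> X0" "j \<in> X0" "k \<in> X - X0" "i \<noteq> j"
    then have "u i j < u i k" "v i j < v i k" using assms(4,5) unfolding is_clade_def by blast+
    then show "?w i j < ?w i k" unfolding trop_comb_def by auto
  qed
  have eqc: "\<And>C. is_clade X0 u C \<longleftrightarrow> is_clade X0 v C"
    using assms(6) unfolding tree_topology_def by blast
  have "is_clade X0 ?w A \<longleftrightarrow> is_clade X0 u A" for A
  proof
    assume u: "is_clade X0 u A"
    then have v: "is_clade X0 v A" using eqc by blast
    show "is_clade X0 ?w A"
      unfolding is_clade_def
    proof (intro conjI ballI impI)
      show "A \<noteq> {}" "A \<subseteq> X0" using u unfolding is_clade_def by auto
    next
      fix i j k assume "i \<in> A" "j \<in> A" "k \<in> X0 - A" "i \<noteq> j"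
      then have "u i j < u i k" "v i j < v i k" using u v unfolding is_clade_def by blast+
      then show "?w i j < ?w i k" unfolding trop_comb_def by auto
    qed
  next
    assume w: "is_clade X0 ?w A"
    show "is_clade X0 u A"
      unfolding is_clade_def
    proof (intro conjI ballI impI)
      show "A \<noteq> {}" "A \<subseteq> X0" using w unfolding is_clade_def by auto
    next
      fix i j k assume i: "i \<in> A" and j: "j \<in> A" and k: "k \<in> X0 - A" and ij: "i \<noteq> j"
      have A0: "A \<subseteq> X0" using w unfolding is_clade_def by auto
      have iX: "i \<in> X0" "j \<in> X0" "k \<in> X0" "i \<noteq> k" "j \<noteq> k" using i j k A0 by auto
      have wlt: "?w i j < ?w i k" using w i j k ij unfolding is_clade_def by blast
      show "u i j < u i k"
      proof (rule ccontr)
        assume nu: "\<not> u i j < u i k"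
        have iX': "i \<in> X" "j \<in> X" "k \<in> X" using iX S by auto
        have t1: "u j k \<le> max (u j i) (u k i)"
          using ult_tri[OF assms(2)] iX' iX ij by blast
        have s1: "u j i = u i j" "u k i = u i k"
          using ult_sym[OF assms(2)] iX' iX ij by metis+
        have nu2: "\<not> u j i < u j k" using nu t1 s1 by auto
        have "\<not> (\<exists>C. is_clade X0 u C \<and> j \<in> C \<and> i \<in> C \<and> k \<notin> C)"
          using sep_iff[OF assms(2) S iX(2) iX(1) iX(3)] nu2 ij iX by auto
        then have "\<not> (\<exists>C. is_clade X0 v C \<and> j \<in> C \<and> i \<in> C \<and> k \<notin> C)" using eqc by blast
        then have "\<not> v j i < v j k"
          using sep_iff[OF assms(3) S iX(2) iX(1) iX(3)] ij iX by auto
        moreover have t2: "v i k \<le> max (v i j) (v k j)"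
          using ult_tri[OF assms(3)] iX' iX ij by blast
        moreover have s2: "v j i = v i j" "v k j = v j k"
          using ult_sym[OF assms(3)] iX' iX ij by metis+
        ultimately have nv: "\<not> v i j < v i k" by auto
        show False using nu nv wlt unfolding trop_comb_def by auto
      qed
    qed
  qed
  then show ?thesis using part1 unfolding tree_topology_def by blast
qed

end
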